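(* Let $L\ge1$, $S_0>0$, $N_0\ge0$, and for $l=1,\dots,L$ let $S_l,N_l\ge 0$ and constants $A_l>0$, $B_l,C_l,\xi_l\ge 0$ satisfy $S_l\ge A_lS_{l-1}$ and $N_l\le B_lN_{l-1}+C_lS_{l-1}+\xi_l$. Let $D$ be a finite set of documents, $D^+\subseteq D$ a nonempty gold set, $S_D:D\to[0,\infty)$ a document score function, and $P_k$ a set of $k$ documents with the largest scores (ties arbitrary). Fix $0<\rho\le\rho_A$, put $m_\rho=\lceil\rho|D^+|\rceil$, let $\tau_\rho^+$ be the $m_\rho$-th largest gold score, $\mathcal B_\rho=\min\{k:|P_k\cap D^+|\ge m_\rho\}$ and $M_L^-=\sum_{d\in D\setminus D^+}S_D(d)$. Assume there are constants $K_A\ge0$, $\zeta_A\ge0$, $c_\rho\in(0,1]$ with $$M_L^-\le K_AN_L+\zeta_A,\qquad \tau_\rho^+\ge\frac{c_\rho}{m_\rho}S_L .$$ Then $$\mathcal B_\rho\le m_\rho+\frac{m_\rho K_A}{c_\rho}\operatorname{SNR}_L^{-1}+\frac{m_\rho\zeta_A}{c_\rho S_L},$$ and consequently $$\mathcal B_\rho\le m_\rho+\frac{m_\rho K_A}{c_\rho}\Big[\Big(\prod_{l=1}^{L}\frac{B_l}{A_l}\Big)\operatorname{SNR}_0^{-1}+\sum_{i=1}^{L}\Big(\frac{C_i}{A_i}+\frac{\xi_i}{A_iS_{i-1}}\Big)\prod_{t=i+1}^{L}\frac{B_t}{A_t}\Big]+\frac{m_\rho\zeta_A}{c_\rho S_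L}.$$
   Context: $\operatorname{SNR}_l=S_l/N_l$ ($+\infty$ if $N_l=0$), $\operatorname{SNR}_l^{-1}=N_l/S_l$; empty products equal $1$. In the paper $S_l,N_l$ are entity-level evidence-signal and noise masses at layer $l$ of a graph reader, and document scores come from entity-to-document projection. $\rho_A\in[0,1]$ is the anchor coverage: given an entity set $R_q$ (recoverable evidence region) and anchor sets $A(d)$ of entities for documents $d$, $\rho_A=|\{d\in D^+:A(d)\cap R_q\neq\varnothing\}|/|D^+|$. *)

theory Defs
  imports Complex_Main "HOL-Library.Multiset"
begin

definition snr_inv :: "real \<Rightarrow> real \<Rightarrow> real" where
  "snr_inv S N = N / S"

definition anchor_coverage :: "'e set \<Rightarrow> ('d \<Rightarrow> 'e set) \<Rightarrow> 'd set \<Rightarrow> real" where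
  "anchor_coverage Rq Anch Dp =
     real (card {d \<in> Dp. Anch d \<inter> Rq \<noteq> {}}) / real (card Dp)"

definition m_rho :: "real \<Rightarrow> 'd set \<Rightarrow> nat" where
  "m_rho \<rho> Dp = nat \<lceil>\<rho> * real (card Dp)\<rceil>"

text \<open>The m-th largest gold score (counted with multiplicity), m \<ge> 1.\<close>
definition mth_largest_score :: "('d \<Rightarrow> real) \<Rightarrow> 'd set \<Rightarrow> nat \<Rightarrow> real" where
  "mth_largest_score sc Dp m = rev (sorted_list_of_multiset (image_mset sc (mset_set Dp))) ! (m - 1)"

definition topk_family :: "'d set \<Rightarrow> ('d \<Rightarrow> real) \<Rightarrow> (nat \<Rightarrow> 'd set) \<Rightarrow> bool" where
  "topk_family D sc P \<longleftrightarrow> (\<forall>k \<le> card D. P k \<subseteq> D \<and> card (P k) = k \<and>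
      (\<forall>x \<in> P k. \<forall>y \<in> D - P k. sc y \<le> sc x))"

definition budget :: "'d set \<Rightarrow> (nat \<Rightarrow> 'd set) \<Rightarrow> 'd set \<Rightarrow> nat \<Rightarrow> nat" where
  "budget D P Dp m = (LEAST k. k \<le> card D \<and> m \<le> card (P k \<inter> Dp))"

end

theory Submission
  imports Defs
begin

lemma gold_count:
  fixes sc :: "'d \<Rightarrow> real"
  assumes fin: "finite Dp" and m: "1 \<le> m" "m \<le> card Dp"
  defines "xs \<equiv> rev (sorted_list_of_multiset (image_mset sc (mset_set Dp)))"
  shows "m \<le> card {d \<in> Dp. sc d \<ge> xs ! (m - 1)}"
proof -
  let ?tau = "xs ! (m - 1)"
  define ys where "ys = sorted_list_of_multiset (image_mset sc (mset_set Dp))"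
  have srt: "sorted ys" unfolding ys_def by simp
  have mys: "mset ys = image_mset sc (mset_set Dp)" unfolding ys_def by simp
  have len: "length ys = card Dp" using arg_cong[OF mys, of size] by simp
  have xs: "xs = rev ys" unfolding xs_def ys_def by simp
  have "\<forall>x \<in> set (take m xs). ?tau \<le> x"
  proof
    fix x assume "x \<in> set (take m xs)"
    then obtain j where j: "j < m" "x = xs ! j" using m len xs
      by (auto simp: in_set_conv_nth)
    have "x = ys ! (length ys - 1 - j)" using j m len xs by (simp add: rev_nth)
    moreover have "?tau = ys ! (length ys - m)" using j m len xs
      by (simp add: rev_nth)
    ultimately show "?tau \<le> x" using srt j m len
      by (simp add: sorted_nth_mono)
  qed
  hence "filter (\<lambda>v. ?tau \<le> v) (take m xs) = take m xs" by simp
  hence "m \<le> length (filter (\<lambda>v. ?tau \<le> v) (take m xs))" using m len xs by simp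
  also have "\<dots> \<le> length (filter (\<lambda>v. ?tau \<le> v) xs)"
    by (metis append_take_drop_id filter_append le_add1 length_append)
  also have "\<dots> = size (filter_mset (\<lambda>v. ?tau \<le> v) (mset xs))"
    by (metis mset_filter size_mset)
  also have "\<dots> = size (image_mset sc (filter_mset (\<lambda>d. ?tau \<le> sc d) (mset_set Dp)))"
    using mys xs by (simp add: filter_mset_image_mset)
  also have "\<dots> = card {d \<in> Dp. sc d \<ge> ?tau}"
    using fin by (simp add: filter_mset_mset_set)
  finally show ?thesis .
qed

lemma snr_rec:
  fixes S N A B C \<xi> :: "nat \<Rightarrow> real"
  assumes S0: "S 0 > 0" and N0: "N 0 \<ge> 0"
    and SN_nonneg: "\<forall>l \<in> {1..L}. S l \<ge> 0 \<and> N l \<ge> 0"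
    and coef: "\<forall>l \<in> {1..L}. A l > 0 \<and> B l \<ge> 0 \<and> C l \<ge> 0 \<and> \<xi> l \<ge> 0"
    and sig: "\<forall>l \<in> {1..L}. S l \<ge> A l * S (l - 1)"
    and noise: "\<forall>l \<in> {1..L}. N l \<le> B l * N (l - 1) + C l * S (l - 1) + \<xi> l"
  shows "l \<le> L \<Longrightarrow> S l > 0 \<and> N l \<ge> 0 \<and> N l / S l \<le> (\<Prod>j = 1..l. B j / A j) * (N 0 / S 0)
     + (\<Sum>i = 1..l. (C i / A i + \<xi> i / (A i * S (i - 1))) * (\<Prod>t = i + 1..l. B t / A t))"
proof (induction l)
  case 0
  then show ?case using S0 N0 by simp
next
  case (Suc l)
  define R where "R = (\<Prod>j = 1..l. B j / A j) * (N 0 / S 0)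
     + (\<Sum>i = 1..l. (C i / A i + \<xi> i / (A i * S (i - 1))) * (\<Prod>t = i + 1..l. B t / A t))"
  have IH: "S l > 0" "N l \<ge> 0" "N l / S l \<le> R" using Suc unfolding R_def by auto
  have mem: "Suc l \<in> {1..L}" using Suc.prems by simp
  have a: "A (Suc l) > 0" and b: "B (Suc l) \<ge> 0" and cc: "C (Suc l) \<ge> 0" and x: "\<xi> (Suc l) \<ge> 0"
    using coef mem by auto
  have sg: "S (Suc l) \<ge> A (Suc l) * S l" using bspec[OF sig mem] by simp
  have ns: "N (Suc l) \<le> B (Suc l) * N l + C (Suc l) * S l + \<xi> (Suc l)" using bspec[OF noise mem] by simp
  have nn: "N (Suc l) \<ge> 0" using SN_nonneg mem by auto
  have Sp: "S (Suc l) > 0" using sg a IH(1) by (smt (verit) mult_pos_pos)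
  have ASp: "A (Suc l) * S l > 0" using a IH(1) by simp
  let ?st = "B (Suc l) * N l + C (Suc l) * S l + \<xi> (Suc l)"
  have "N (Suc l) / S (Suc l) \<le> ?st / S (Suc l)"
    using ns Sp by (simp add: divide_right_mono)
  also have "\<dots> \<le> ?st / (A (Suc l) * S l)"
    using ns nn ASp sg by (intro divide_left_mono) auto
  also have "\<dots> = B (Suc l) / A (Suc l) * (N l / S l) + C (Suc l) / A (Suc l)
      + \<xi> (Suc l) / (A (Suc l) * S l)"
    using a IH(1) by (simp add: field_simps)
  also have "\<dots> \<le> B (Suc l) / A (Suc l) * R + C (Suc l) / A (Suc l)
      + \<xi> (Suc l) / (A (Suc l) * S l)"
    proof -
    have "B (Suc l) / A (Suc l) * (N l / S l) \<le> B (Suc l) / A (Suc l) * R"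
      using IH(3) a b by (intro mult_left_mono) auto
    then show ?thesis by linarith
  qed
  also have "\<dots> = (\<Prod>j = 1..Suc l. B j / A j) * (N 0 / S 0)
     + (\<Sum>i = 1..Suc l. (C i / A i + \<xi> i / (A i * S (i - 1))) * (\<Prod>t = i + 1..Suc l. B t / A t))"
  proof -
    have p1: "(\<Prod>j = 1..Suc l. B j / A j) = (\<Prod>j = 1..l. B j / A j) * (B (Suc l) / A (Suc l))"
      by (simp add: prod.nat_ivl_Suc')
    have p2: "(\<Prod>t = i + 1..Suc l. B t / A t) = (\<Prod>t = i + 1..l. B t / A t) * (B (Suc l) / A (Suc l))"
      if "i \<in> {1..l}" for i
      using that by (subst prod.nat_ivl_Suc') auto
    have s1: "(\<Sum>i = 1..Suc l. (C i / A i + \<xi> i / (A i * S (i - 1))) * (\<Prod>t = i + 1..Suc l. B t / A t))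
       = (\<Sum>i = 1..l. (C i / A i + \<xi> i / (A i * S (i - 1))) * (\<Prod>t = i + 1..Suc l. B t / A t))
         + (C (Suc l) / A (Suc l) + \<xi> (Suc l) / (A (Suc l) * S l))"
      by (simp add: sum.nat_ivl_Suc')
    have s2: "(\<Sum>i = 1..l. (C i / A i + \<xi> i / (A i * S (i - 1))) * (\<Prod>t = i + 1..Suc l. B t / A t))
       = (B (Suc l) / A (Suc l)) * (\<Sum>i = 1..l. (C i / A i + \<xi> i / (A i * S (i - 1))) * (\<Prod>t = i + 1..l. B t / A t))"
      unfolding sum_distrib_left by (rule sum.cong) (simp_all only: p2 mult_ac)
    show ?thesis unfolding R_def p1 s1 s2 by (simp add: algebra_simps)
  qed
  finally show ?case using Sp nn by simp
qed

theorem theorem1p13: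
  fixes L :: nat
    and S N A B C \<xi> :: "nat \<Rightarrow> real"
    and D Dp :: "'d set"
    and sc :: "'d \<Rightarrow> real"
    and P :: "nat \<Rightarrow> 'd set"
    and Rq :: "'e set" and Anch :: "'d \<Rightarrow> 'e set"
    and \<rho> KA \<zeta>A c :: real
  assumes L: "L \<ge> 1"
    and S0: "S 0 > 0" and N0: "N 0 \<ge> 0"
    and SN_nonneg: "\<forall>l \<in> {1..L}. S l \<ge> 0 \<and> N l \<ge> 0"
    and coef: "\<forall>l \<in> {1..L}. A l > 0 \<and> B l \<ge> 0 \<and> C l \<ge> 0 \<and> \<xi> l \<ge> 0"
    and sig: "\<forall>l \<in> {1..L}. S l \<ge> A l * S (l - 1)"
    and noise: "\<forall>l \<in> {1..L}. N l \<le> B l * N (l - 1) + C l * S (l - 1) + \<xi> l"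
    and finD: "finite D" and Dp_sub: "Dp \<subseteq> D" and Dp_ne: "Dp \<noteq> {}"
    and sc_nonneg: "\<forall>d \<in> D. sc d \<ge> 0"
    and topk: "topk_family D sc P"
    and rho: "0 < \<rho>" "\<rho> \<le> anchor_coverage Rq Anch Dp"
    and KA: "KA \<ge> 0" and \<zeta>A: "\<zeta>A \<ge> 0" and c: "0 < c" "c \<le> 1"
    and neg_mass: "(\<Sum>d \<in> D - Dp. sc d) \<le> KA * N L + \<zeta>A"
    and gold_thr: "mth_largest_score sc Dp (m_rho \<rho> Dp) \<ge> c / real (m_rho \<rho> Dp) * S L"
  shows "real (budget D P Dp (m_rho \<rho> Dp)) \<le>
           real (m_rho \<rho> Dp) + real (m_rho \<rho> Dp) * KA / c * snr_inv (S L) (N L)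
           + real (m_rho \<rho> Dp) * \<zeta>A / (c * S L)
       \<and> real (budget D P Dp (m_rho \<rho> Dp)) \<le>
           real (m_rho \<rho> Dp) + real (m_rho \<rho> Dp) * KA / c *
             ((\<Prod>l = 1..L. B l / A l) * snr_inv (S 0) (N 0)
              + (\<Sum>i = 1..L. (C i / A i + \<xi> i / (A i * S (i - 1))) * (\<Prod>t = i + 1..L. B t / A t)))
           + real (m_rho \<rho> Dp) * \<zeta>A / (c * S L)"
proof -
  let ?m = "m_rho \<rho> Dp"
  let ?tau = "mth_largest_score sc Dp ?m"
  have finDp: "finite Dp" using finD Dp_sub finite_subset by blast
  have cardpos: "card Dp > 0" using finDp Dp_ne by (simp add: card_gt_0_iff)
  have cov: "anchor_coverage Rq Anch Dp \<le> 1"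
    unfolding anchor_coverage_def using cardpos finDp
    by (simp add: divide_le_eq_1 card_mono)
  have m1: "1 \<le> ?m"
  proof -
    have "0 < \<rho> * real (card Dp)" using rho cardpos by simp
    hence "0 < \<lceil>\<rho> * real (card Dp)\<rceil>" by simp
    thus ?thesis unfolding m_rho_def by linarith
  qed
  have m2: "?m \<le> card Dp"
  proof -
    have "\<rho> * real (card Dp) \<le> 1 * real (card Dp)"
      using rho cov by (intro mult_right_mono) auto
    hence "\<lceil>\<rho> * real (card Dp)\<rceil> \<le> int (card Dp)"
      by (metis ceiling_mono ceiling_of_nat mult_1)
    thus ?thesis unfolding m_rho_def by (metis nat_int nat_mono)
  qed
  have rec: "S L > 0 \<and> N L \<ge> 0 \<and> N L / S L \<le> (\<Prod>j = 1..L. B j / A j) * (N 0 / S 0)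
     + (\<Sum>i = 1..L. (C i / A i + \<xi> i / (A i * S (i - 1))) * (\<Prod>t = i + 1..L. B t / A t))"
    by (rule snr_rec[OF S0 N0 SN_nonneg coef sig noise]) simp
  hence SL: "S L > 0" and NL: "N L \<ge> 0" by auto
  have mpos: "real ?m > 0" using m1 by simp
  have taupos: "?tau \<ge> c * S L / real ?m" using gold_thr by simp
  have taugt: "?tau > 0" using taupos c SL mpos
    by (smt (verit) divide_pos_pos mult_pos_pos)
  define T where "T = {d \<in> D. sc d \<ge> ?tau}"
  define NG where "NG = {d \<in> D - Dp. sc d \<ge> ?tau}"
  define n where "n = card NG"
  have finT: "finite T" using finD unfolding T_def by simp
  have finNG: "finite NG" using finD unfolding NG_def by simp
  have gc: "?m \<le> card {d \<in> Dp. sc d \<ge> ?tau}"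
    using gold_count[OF finDp m1 m2, of sc] unfolding mth_largest_score_def by simp
  have "card T = card (T \<inter> Dp) + card NG"
  proof -
    have "T = (T \<inter> Dp) \<union> NG" "(T \<inter> Dp) \<inter> NG = {}"
      unfolding T_def NG_def by auto
    thus ?thesis using finT finNG by (metis card_Un_disjoint finite_Int)
  qed
  moreover have "{d \<in> Dp. sc d \<ge> ?tau} \<subseteq> T \<inter> Dp" unfolding T_def using Dp_sub by auto
  hence "card {d \<in> Dp. sc d \<ge> ?tau} \<le> card (T \<inter> Dp)" using finT by (simp add: card_mono)
  ultimately have kT: "?m + n \<le> card T" using gc unfolding n_def by linarith
  have TD: "card T \<le> card D" unfolding T_def using finD by (simp add: card_mono)
  let ?k = "?m + n"
  have kD: "?k \<le> card D" using kT TD by linarith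
  have Pk: "P ?k \<subseteq> D" "card (P ?k) = ?k" "\<forall>x \<in> P ?k. \<forall>y \<in> D - P ?k. sc y \<le> sc x"
    using topk kD unfolding topk_family_def by auto
  have finP: "finite (P ?k)" using Pk(1) finD finite_subset by blast
  have PT: "P ?k \<subseteq> T"
  proof
    fix x assume x: "x \<in> P ?k"
    show "x \<in> T"
    proof (rule ccontr)
      assume "x \<notin> T"
      hence lt: "sc x < ?tau" using x Pk(1) unfolding T_def by auto
      have "T \<subseteq> P ?k"
      proof
        fix y assume y: "y \<in> T"
        show "y \<in> P ?k"
        proof (rule ccontr)
          assume "y \<notin> P ?k"
          hence "sc y \<le> sc x" using Pk(3) x y unfolding T_def by auto
          thus False using y lt unfolding T_def by auto
        qed
      qed
      hence "T \<subset> P ?k" using x \<open>x \<notin> T\<close> by auto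
      hence "card T < card (P ?k)" using finP by (simp add: psubset_card_mono)
      thus False using Pk(2) kT by linarith
    qed
  qed
  have "P ?k - Dp \<subseteq> NG" using PT unfolding T_def NG_def by auto
  hence c1: "card (P ?k - Dp) \<le> n" unfolding n_def using finNG by (simp add: card_mono)
  have "card (P ?k) = card (P ?k \<inter> Dp) + card (P ?k - Dp)"
    using finP by (metis Int_Diff_disjoint Int_Diff_Un card_Un_disjoint finite_Diff finite_Int)
  hence good: "?m \<le> card (P ?k \<inter> Dp)" using c1 Pk(2) by linarith
  have bud: "budget D P Dp ?m \<le> ?k"
    unfolding budget_def using kD good by (intro Least_le) simp
  have "real n * ?tau = (\<Sum>d \<in> NG. ?tau)" by (simp add: n_def)
  also have "\<dots> \<le> (\<Sum>d \<in> NG. sc d)" unfolding NG_def by (rule sum_mono) simp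
  also have "\<dots> \<le> (\<Sum>d \<in> D - Dp. sc d)"
    using finD sc_nonneg unfolding NG_def by (intro sum_mono2) auto
  also have "\<dots> \<le> KA * N L + \<zeta>A" by (rule neg_mass)
  finally have ntau: "real n * ?tau \<le> KA * N L + \<zeta>A" .
  have "real n * (c * S L / real ?m) \<le> real n * ?tau"
    using taupos by (intro mult_left_mono) auto
  with ntau have "real n * (c * S L / real ?m) \<le> KA * N L + \<zeta>A" by linarith
  hence "real n * (c * S L) \<le> (KA * N L + \<zeta>A) * real ?m" using mpos
    by (simp add: field_simps)
  hence nb: "real n \<le> (KA * N L + \<zeta>A) * real ?m / (c * S L)" using c SL
    by (simp add: field_simps)
  have eq: "(KA * N L + \<zeta>A) * real ?m / (c * S L) =
     real ?m * KA / c * snr_inv (S L) (N L) + real ?m * \<zeta>A / (c * S L)"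
    using c SL unfolding snr_inv_def by (simp add: field_simps)
  have first: "real (budget D P Dp ?m) \<le>
           real ?m + real ?m * KA / c * snr_inv (S L) (N L) + real ?m * \<zeta>A / (c * S L)"
    using bud nb eq by (smt (verit) of_nat_add of_nat_mono)
  have "real ?m * KA / c * snr_inv (S L) (N L) \<le> real ?m * KA / c *
             ((\<Prod>l = 1..L. B l / A l) * snr_inv (S 0) (N 0)
              + (\<Sum>i = 1..L. (C i / A i + \<xi> i / (A i * S (i - 1))) * (\<Prod>t = i + 1..L. B t / A t)))"
    using rec KA c unfolding snr_inv_def by (intro mult_left_mono) auto
  with first show ?thesis by linarith
qed

end
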